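(* Let $\nu\geq5$ be an integer and let $f_{\nu-1}(z,\zeta)=z^{\nu-1}f(\zeta)$, $g_{\nu-2}(z,\zeta)=z^{\nu-2}g(\zeta)$, $h_\nu(z,\zeta)=z^\nu h(\zeta)$ with $f,g,h$ holomorphic near $0\in\mathbb{C}$. Define $$\Phi(z,\zeta,\bar z,\bar\zeta):=2\operatorname{Re}\Big\{\frac{\bar z+z\bar\zeta}{1-\zeta\bar\zeta}f_{\nu-1}(z,\zeta)+\frac{(\bar z+z\bar\zeta)^2}{2(1-\zeta\bar\zeta)^2}g_{\nu-2}(z,\zeta)-\frac12h_\nu(z,\zeta)\Big\}.$$ Then $\Phi=O_{\bar z}(3)+O_{\bar\zeta}(1)$ if and only if $f_{\nu-1}=g_{\nu-2}=h_\nu=0$. Equivalently, at weight level $\nu\geq5$, the only biholomorphism $z'=z+f_{\nu-1}$, $\zeta'=\zeta+g_{\nu-2}$, $w'=w+h_\nu$ for which the weight-$\nu$ parts $G_\nu$ and $G'_\nu=G_\nu-\Phi$ both satisfy $G_\nu=O_{\bar z}(3)+O_{\bar\zeta}(1)=G'_\nu$ is the identity.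
   Context: $2\operatorname{Re}\{X\}=X+\overline X$. The notation $O_{\bar z}(3)+O_{\bar\zeta}(1)$ means a function of the form $\bar z^3A+\bar\zeta B$ with $A,B$ convergent power series in $(z,\zeta,\bar z,\bar\zeta)$. Weights: $[z]=[\bar z]=1$, $[\zeta]=[\bar\zeta]=0$; $G_\nu$ denotes a weighted homogeneous real power series of weight $\nu$ (all monomials $z^a\zeta^b\bar z^c\bar\zeta^d$ with $a+c=\nu$). *)

theory Defs
  imports "HOL-Analysis.Analysis"
begin

definition conv_ps4 :: "(nat \<Rightarrow> nat \<Rightarrow> nat \<Rightarrow> nat \<Rightarrow> complex) \<Rightarrow> bool" where
  "conv_ps4 c \<longleftrightarrow> (\<exists>\<rho>>0. (\<lambda>(a, b, k, d). norm (c a b k d) * \<rho> ^ (a + b + k + d))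
      summable_on (UNIV :: (nat \<times> nat \<times> nat \<times> nat) set))"

definition eval_ps4 :: "(nat \<Rightarrow> nat \<Rightarrow> nat \<Rightarrow> nat \<Rightarrow> complex) \<Rightarrow> complex \<Rightarrow> complex \<Rightarrow> complex \<Rightarrow> complex \<Rightarrow> complex" where
  "eval_ps4 c x1 x2 x3 x4 =
     (\<Sum>\<^sub>\<infinity>(a, b, k, d) \<in> (UNIV :: (nat \<times> nat \<times> nat \<times> nat) set).
        c a b k d * x1 ^ a * x2 ^ b * x3 ^ k * x4 ^ d)"

text \<open>A function F of (z, zeta) (real-analytic, viewed as a function of z, zeta, zbar, zetabar)
  is O_zbar(3) + O_zetabar(1): F = zbar^3 A + zetabar B near 0 with A, B convergent power series
  in (z, zeta, zbar, zetabar).\<close>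
definition O_zbar3_zetabar1 :: "(complex \<Rightarrow> complex \<Rightarrow> complex) \<Rightarrow> bool" where
  "O_zbar3_zetabar1 F \<longleftrightarrow>
     (\<exists>A B. conv_ps4 A \<and> conv_ps4 B \<and>
        (\<exists>\<epsilon>>0. \<forall>z \<zeta>. norm z < \<epsilon> \<and> norm \<zeta> < \<epsilon> \<longrightarrow>
           F z \<zeta> = cnj z ^ 3 * eval_ps4 A z \<zeta> (cnj z) (cnj \<zeta>)
                  + cnj \<zeta> * eval_ps4 B z \<zeta> (cnj z) (cnj \<zeta>)))"

definition Phi :: "nat \<Rightarrow> (complex \<Rightarrow> complex) \<Rightarrow> (complex \<Rightarrow> complex) \<Rightarrow> (complex \<Rightarrow> complex)
    \<Rightarrow> complex \<Rightarrow> complex \<Rightarrow> complex" where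
  "Phi \<nu> f g h z \<zeta> =
     (let X = (cnj z + z * cnj \<zeta>) / (1 - \<zeta> * cnj \<zeta>) * (z ^ (\<nu> - 1) * f \<zeta>)
            + (cnj z + z * cnj \<zeta>) ^ 2 / (2 * (1 - \<zeta> * cnj \<zeta>) ^ 2) * (z ^ (\<nu> - 2) * g \<zeta>)
            - 1 / 2 * (z ^ \<nu> * h \<zeta>)
      in X + cnj X)"

end

theory Submission
  imports Defs "HOL-Complex_Analysis.Complex_Analysis"
begin

lemma tail_bound:
  fixes g :: "'a \<Rightarrow> real"
  assumes sm: "g summable_on UNIV" and nn: "\<And>i. g i \<ge> 0" and e: "e > 0"
  shows "\<exists>F0. finite F0 \<and> (\<forall>F. finite F \<and> F0 \<subseteq> F \<longrightarrow> infsum g (UNIV - F) < e)"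
proof -
  obtain F0 where F0: "finite F0" "dist (sum g F0) (infsum g UNIV) \<le> e/2"
    using infsum_finite_approximation[OF sm, of "e/2"] e by auto
  have "infsum g (UNIV - F) < e" if "finite F" "F0 \<subseteq> F" for F
  proof -
    have s1: "g summable_on (UNIV - F)" using sm summable_on_subset_banach by blast
    have "infsum g UNIV = infsum g F + infsum g (UNIV - F)"
      using infsum_Un_disjoint[of g F "UNIV - F"] that s1 by auto
    moreover have "infsum g F = sum g F" using that by simp
    moreover have "sum g F0 \<le> sum g F" using that nn by (intro sum_mono2) auto
    moreover have "infsum g (UNIV - F) \<ge> 0" using nn by (simp add: infsum_nonneg)
    ultimately show ?thesis using F0 e by (auto simp: dist_real_def)
  qed
  then show ?thesis using F0 by blast
qed

definition trm :: "(nat \<Rightarrow> nat \<Rightarrow> nat \<Rightarrow> nat \<Rightarrow> complex) \<Rightarrow> complex \<Rightarrow> complex \<Rightarrow> complex \<Rightarrow> complex \<Rightarrow> nat \<times> nat \<times> nat \<times> nat \<Rightarrow> complex" where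
  "trm c x1 x2 x3 x4 = (\<lambda>(a, b, k, d). c a b k d * x1 ^ a * x2 ^ b * x3 ^ k * x4 ^ d)"

lemma eval_trm: "eval_ps4 c x1 x2 x3 x4 = infsum (trm c x1 x2 x3 x4) UNIV"
  unfolding eval_ps4_def trm_def by simp

lemma trm_bound:
  assumes "norm x1 \<le> \<rho>" "norm x2 \<le> \<rho>" "norm x3 \<le> \<rho>" "norm x4 \<le> \<rho>"
  shows "norm (trm c x1 x2 x3 x4 i) \<le> (\<lambda>(a, b, k, d). norm (c a b k d) * \<rho> ^ (a + b + k + d)) i"
proof -
  have r0: "\<rho> \<ge> 0" using assms(1) norm_ge_zero order_trans by blast
  obtain a b k d where i: "i = (a,b,k,d)" by (cases i) auto
  have "norm (trm c x1 x2 x3 x4 i) = norm (c a b k d) * (norm x1 ^ a * norm x2 ^ b * norm x3 ^ k * norm x4 ^ d)"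
    by (simp add: trm_def i norm_mult norm_power)
  also have "\<dots> \<le> norm (c a b k d) * (\<rho> ^ a * \<rho> ^ b * \<rho> ^ k * \<rho> ^ d)"
    by (intro mult_left_mono mult_mono power_mono assms) (auto simp: r0)
  also have "\<dots> = norm (c a b k d) * \<rho> ^ (a + b + k + d)" by (simp add: power_add)
  finally show ?thesis by (simp add: i)
qed

lemma ps4_uniform:
  assumes sm: "(\<lambda>(a, b, k, d). norm (c a b k d) * \<rho> ^ (a + b + k + d)) summable_on UNIV"
    and rho: "\<rho> \<ge> 0"
    and bnd: "\<And>x. x \<in> K \<Longrightarrow> norm (p1 x) \<le> \<rho> \<and> norm (p2 x) \<le> \<rho> \<and> norm (p3 x) \<le> \<rho> \<and> norm (p4 x) \<le> \<rho>"
  shows "uniform_limit K (\<lambda>F x. sum (trm c (p1 x) (p2 x) (p3 x) (p4 x)) F)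
            (\<lambda>x. eval_ps4 c (p1 x) (p2 x) (p3 x) (p4 x)) (finite_subsets_at_top UNIV)"
proof (rule uniform_limitI)
  fix e :: real assume e: "e > 0"
  define g where "g = (\<lambda>(a, b, k, d). norm (c a b k d) * \<rho> ^ (a + b + k + d))"
  have gnn: "g i \<ge> 0" for i using rho by (cases i) (auto simp: g_def)
  obtain F0 where F0: "finite F0" "\<And>F. finite F \<and> F0 \<subseteq> F \<Longrightarrow> infsum g (UNIV - F) < e"
    using tail_bound[of g e] sm gnn e unfolding g_def by blast
  have "\<forall>\<^sub>F F in finite_subsets_at_top UNIV. finite F \<and> F0 \<subseteq> F"
    using F0(1) by (auto simp: eventually_finite_subsets_at_top)
  then show "\<forall>\<^sub>F F in finite_subsets_at_top UNIV. \<forall>x\<in>K.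
        dist (sum (trm c (p1 x) (p2 x) (p3 x) (p4 x)) F) (eval_ps4 c (p1 x) (p2 x) (p3 x) (p4 x)) < e"
  proof (rule eventually_mono, safe)
    fix F x assume F: "finite F" "F0 \<subseteq> F" and x: "x \<in> K"
    define t where "t = trm c (p1 x) (p2 x) (p3 x) (p4 x)"
    have tb: "norm (t i) \<le> g i" for i unfolding t_def g_def using bnd[OF x] by (intro trm_bound) auto
    have gs: "g summable_on (UNIV - F)" using sm summable_on_subset_banach unfolding g_def by blast
    have ta: "(\<lambda>i. norm (t i)) summable_on UNIV"
      using Infinite_Sum.abs_summable_on_comparison_test'[of g UNIV t] sm tb unfolding g_def by blast
    then have ts: "t summable_on UNIV" using abs_summable_summable by blast
    have ts2: "(\<lambda>i. norm (t i)) summable_on (UNIV - F)" using ta summable_on_subset_banach by blast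
    have "infsum t UNIV = infsum t F + infsum t (UNIV - F)"
    proof -
      have "t summable_on (UNIV - F)" using ts summable_on_subset_banach by blast
      then show ?thesis using infsum_Un_disjoint[of t F "UNIV - F"] F by auto
    qed
    then have "dist (sum t F) (infsum t UNIV) = norm (infsum t (UNIV - F))"
      using F by (simp add: dist_norm)
    also have "\<dots> \<le> infsum (\<lambda>i. norm (t i)) (UNIV - F)" by (rule norm_infsum_bound[OF ts2])
    also have "\<dots> \<le> infsum g (UNIV - F)" by (rule infsum_mono[OF ts2 gs tb])
    also have "\<dots> < e" using F0(2) F by blast
    finally show "dist (sum t F) (eval_ps4 c (p1 x) (p2 x) (p3 x) (p4 x)) < e"
      by (simp add: eval_trm t_def)
  qed
qed

lemma trm_holo:
  assumes "p1 holomorphic_on S" "p2 holomorphic_on S" "p3 holomorphic_on S" "p4 holomorphic_on S"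
  shows "(\<lambda>x. sum (trm c (p1 x) (p2 x) (p3 x) (p4 x)) F) holomorphic_on S"
proof (intro holomorphic_on_sum)
  fix i assume "i \<in> F"
  obtain a b k d where i: "i = (a,b,k,d)" by (cases i) auto
  show "(\<lambda>x. trm c (p1 x) (p2 x) (p3 x) (p4 x) i) holomorphic_on S"
    unfolding i trm_def using assms by (simp, intro holomorphic_intros)
qed

lemma ps4_holo:
  assumes sm: "(\<lambda>(a, b, k, d). norm (c a b k d) * \<rho> ^ (a + b + k + d)) summable_on UNIV"
    and S: "open S"
    and h1: "p1 holomorphic_on S" and h2: "p2 holomorphic_on S"
    and h3: "p3 holomorphic_on S" and h4: "p4 holomorphic_on S"
    and bnd: "\<And>x. x \<in> S \<Longrightarrow> norm (p1 x) < \<rho> \<and> norm (p2 x) < \<rho> \<and> norm (p3 x) < \<rho> \<and> norm (p4 x) < \<rho>"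
  shows "(\<lambda>x. eval_ps4 c (p1 x) (p2 x) (p3 x) (p4 x)) holomorphic_on S"
proof -
  have "\<exists>e>0. (\<lambda>x. eval_ps4 c (p1 x) (p2 x) (p3 x) (p4 x)) holomorphic_on ball x e" if x: "x \<in> S" for x
  proof -
    obtain e where e: "e > 0" "cball x e \<subseteq> S" using S x open_contains_cball_eq by blast
    have r0: "\<rho> \<ge> 0" using bnd[OF x] norm_ge_zero[of "p1 x"] by linarith
    have ul: "uniform_limit (cball x e) (\<lambda>F x. sum (trm c (p1 x) (p2 x) (p3 x) (p4 x)) F)
            (\<lambda>x. eval_ps4 c (p1 x) (p2 x) (p3 x) (p4 x)) (finite_subsets_at_top UNIV)"
      by (rule ps4_uniform[OF sm r0]) (use bnd e in \<open>fastforce intro: less_imp_le\<close>)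
    have hol: "(\<lambda>x. sum (trm c (p1 x) (p2 x) (p3 x) (p4 x)) F) holomorphic_on S" for F
      by (rule trm_holo[OF h1 h2 h3 h4])
    have "\<forall>\<^sub>F F in finite_subsets_at_top UNIV. continuous_on (cball x e) (\<lambda>x. sum (trm c (p1 x) (p2 x) (p3 x) (p4 x)) F)
        \<and> (\<lambda>x. sum (trm c (p1 x) (p2 x) (p3 x) (p4 x)) F) holomorphic_on ball x e"
      using hol e by (intro always_eventually allI conjI)
        (meson ball_subset_cball holomorphic_on_imp_continuous_on holomorphic_on_subset order_trans)+
    then obtain "(\<lambda>x. eval_ps4 c (p1 x) (p2 x) (p3 x) (p4 x)) holomorphic_on ball x e"
      using holomorphic_uniform_limit[OF _ ul] finite_subsets_at_top_neq_bot by blast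
    then show ?thesis using e by blast
  qed
  then have "(\<lambda>x. eval_ps4 c (p1 x) (p2 x) (p3 x) (p4 x)) analytic_on S"
    by (simp add: analytic_on_def)
  then show ?thesis by (rule analytic_imp_holomorphic)
qed

definition fs :: "(complex \<Rightarrow> complex) \<Rightarrow> complex \<Rightarrow> complex" where
  "fs f w = cnj (f (cnj w))"

definition Gt where
  "Gt \<nu> f g h A B z \<zeta> w1 w2 =
     (w1 + z * w2) / (1 - \<zeta> * w2) * (z ^ (\<nu> - 1) * f \<zeta>)
   + (w1 + z * w2) ^ 2 / (2 * (1 - \<zeta> * w2) ^ 2) * (z ^ (\<nu> - 2) * g \<zeta>)
   - 1 / 2 * (z ^ \<nu> * h \<zeta>)
   + ((z + w1 * \<zeta>) / (1 - w2 * \<zeta>) * (w1 ^ (\<nu> - 1) * fs f w2)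
   + (z + w1 * \<zeta>) ^ 2 / (2 * (1 - w2 * \<zeta>) ^ 2) * (w1 ^ (\<nu> - 2) * fs g w2)
   - 1 / 2 * (w1 ^ \<nu> * fs h w2))
   - w1 ^ 3 * eval_ps4 A z \<zeta> w1 w2 - w2 * eval_ps4 B z \<zeta> w1 w2"

lemma Phi_Gt:
  "Phi \<nu> f g h z \<zeta> = Gt \<nu> f g h A B z \<zeta> (cnj z) (cnj \<zeta>)
      + cnj z ^ 3 * eval_ps4 A z \<zeta> (cnj z) (cnj \<zeta>) + cnj \<zeta> * eval_ps4 B z \<zeta> (cnj z) (cnj \<zeta>)"
  by (simp add: Phi_def Gt_def fs_def Let_def mult.commute)

lemma fs_holo:
  assumes "f holomorphic_on ball 0 r"
  shows "fs f holomorphic_on ball 0 r"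
proof -
  have "cnj ` ball 0 r = ball (0::complex) r"
    by (auto simp: image_iff intro!: bexI[where x="cnj _"])
  then have "cnj \<circ> f \<circ> cnj holomorphic_on ball 0 r"
    using assms by (intro holomorphic_on_compose_cnj_cnj) auto
  then show ?thesis by (simp add: fs_def[abs_def] comp_def)
qed

lemma comp_holo:
  assumes "f holomorphic_on ball 0 r" "p holomorphic_on S" "\<And>x. x \<in> S \<Longrightarrow> norm (p x) < r"
  shows "(\<lambda>x. f (p x)) holomorphic_on S"
proof -
  have "p ` S \<subseteq> ball 0 r" using assms(3) by auto
  then show ?thesis using holomorphic_on_compose_gen[of p S f "ball 0 r"] assms by (auto simp: comp_def)
qed

lemma Gt_holo:
  assumes smA: "(\<lambda>(a, b, k, d). norm (A a b k d) * \<rho>A ^ (a + b + k + d)) summable_on UNIV"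
    and smB: "(\<lambda>(a, b, k, d). norm (B a b k d) * \<rho>B ^ (a + b + k + d)) summable_on UNIV"
    and S: "open S"
    and h1: "qa holomorphic_on S" and h2: "qb holomorphic_on S"
    and h3: "qc holomorphic_on S" and h4: "qd holomorphic_on S"
    and hf: "f holomorphic_on ball 0 r" and hg: "g holomorphic_on ball 0 r" and hh: "h holomorphic_on ball 0 r"
    and bA: "\<And>x. x \<in> S \<Longrightarrow> norm (qa x) < \<rho>A \<and> norm (qb x) < \<rho>A \<and> norm (qc x) < \<rho>A \<and> norm (qd x) < \<rho>A"
    and bB: "\<And>x. x \<in> S \<Longrightarrow> norm (qa x) < \<rho>B \<and> norm (qb x) < \<rho>B \<and> norm (qc x) < \<rho>B \<and> norm (qd x) < \<rho>B"
    and br: "\<And>x. x \<in> S \<Longrightarrow> norm (qb x) < r \<and> norm (qd x) < r"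
    and nz: "\<And>x. x \<in> S \<Longrightarrow> qb x * qd x \<noteq> 1"
  shows "(\<lambda>x. Gt \<nu> f g h A B (qa x) (qb x) (qc x) (qd x)) holomorphic_on S"
proof -
  have eA: "(\<lambda>x. eval_ps4 A (qa x) (qb x) (qc x) (qd x)) holomorphic_on S"
    by (rule ps4_holo[OF smA S h1 h2 h3 h4 bA])
  have eB: "(\<lambda>x. eval_ps4 B (qa x) (qb x) (qc x) (qd x)) holomorphic_on S"
    by (rule ps4_holo[OF smB S h1 h2 h3 h4 bB])
  have c1: "(\<lambda>x. f (qb x)) holomorphic_on S" "(\<lambda>x. g (qb x)) holomorphic_on S" "(\<lambda>x. h (qb x)) holomorphic_on S"
    using comp_holo[OF hf h2] comp_holo[OF hg h2] comp_holo[OF hh h2] br by auto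
  have c2: "(\<lambda>x. fs f (qd x)) holomorphic_on S" "(\<lambda>x. fs g (qd x)) holomorphic_on S" "(\<lambda>x. fs h (qd x)) holomorphic_on S"
    using comp_holo[OF fs_holo[OF hf] h4] comp_holo[OF fs_holo[OF hg] h4] comp_holo[OF fs_holo[OF hh] h4] br by auto
  have d1: "\<forall>x\<in>S. 1 - qb x * qd x \<noteq> 0" "\<forall>x\<in>S. 1 - qd x * qb x \<noteq> 0"
    using nz by (auto simp: mult.commute)
  show ?thesis unfolding Gt_def
    using d1 by (intro holomorphic_intros eA eB c1 c2 h1 h2 h3 h4) auto
qed

definition ann :: "real \<Rightarrow> real \<Rightarrow> complex set" where
  "ann a b = {x. a < norm x \<and> norm x < b}"

lemma ann_open: "open (ann a b)"
proof -
  have "ann a b = ball 0 b - cball 0 a" by (auto simp: ann_def)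
  then show ?thesis by auto
qed

lemma ann_connected: "connected (ann a b)"
proof -
  have "2 \<le> DIM(complex)" by simp
  from connected_annulus(1)[OF this, of a 0 b] show ?thesis by (simp add: ann_def)
qed

lemma sphere_limpt:
  assumes "s > 0"
  shows "complex_of_real s islimpt sphere 0 s"
proof (rule connected_imp_perfect)
  show "connected (sphere (0::complex) s)" by (rule connected_sphere) auto
  show "complex_of_real s \<in> sphere 0 s" using assms by simp
  fix x :: complex show "sphere 0 s \<noteq> {x}"
  proof
    assume a: "sphere 0 s = {x}"
    have "complex_of_real s \<in> sphere 0 s" "complex_of_real (-s) \<in> sphere 0 s" using assms by auto
    then have "complex_of_real s = x" "complex_of_real (-s) = x" using a by blast+
    then have "complex_of_real s = complex_of_real (-s)" by simp
    then show False using assms by (simp add: of_real_eq_iff)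
  qed
qed

lemma sphere_cnj:
  assumes "norm z = s" "s > 0"
  shows "complex_of_real (s ^ 2) / z = cnj z"
proof -
  have "z \<noteq> 0" using assms by auto
  moreover have "complex_of_real (s^2) = z * cnj z" by (metis assms(1) complex_norm_square of_real_power)
  ultimately show ?thesis by (simp add: field_simps)
qed

lemma lim_zero:
  fixes Q :: "complex \<Rightarrow> complex"
  assumes "isCont Q 0" "\<delta> > 0" "\<And>y. 0 < y \<Longrightarrow> y < \<delta> \<Longrightarrow> Q (complex_of_real y) = 0"
  shows "Q 0 = 0"
proof -
  have "((\<lambda>y. Q (complex_of_real y)) \<longlongrightarrow> Q (complex_of_real 0)) (at_right 0)"
    using assms(1) by (intro isCont_tendsto_compose[where g=Q] tendsto_of_real tendsto_ident_at) auto
  moreover have "\<forall>\<^sub>F y in at_right 0. Q (complex_of_real y) = 0"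
    using assms(2,3) by (auto simp: eventually_at_right_field intro!: exI[of _ \<delta>])
  ultimately have "((\<lambda>y. 0) \<longlongrightarrow> Q 0) (at_right (0::real))"
    by (simp add: Lim_transform_eventually)
  moreover have "\<not> trivial_limit (at_right (0::real))" by simp
  ultimately have "(0::complex) = Q 0" using tendsto_const_iff[where F="at_right (0::real)" and a="0::complex" and b="Q 0"] by blast
  then show ?thesis by simp
qed

lemma ann_inv:
  assumes "z \<in> ann (s^2/\<delta>) \<delta>" "\<delta> > 0"
  shows "norm (complex_of_real (s^2) / z) < \<delta>" "z \<noteq> 0" "norm z < \<delta>"
proof -
  have z: "s^2/\<delta> < norm z" "norm z < \<delta>" using assms by (auto simp: ann_def)
  then have zp: "norm z > 0" using assms(2) by (smt (verit) divide_nonneg_pos zero_le_power2)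
  then show "z \<noteq> 0" by auto
  have "s^2 < \<delta> * norm z" using z(1) assms(2) by (simp add: divide_less_eq mult.commute)
  then show "norm (complex_of_real (s^2) / z) < \<delta>"
    using zp by (simp add: norm_divide divide_less_eq norm_power)
  show "norm z < \<delta>" by (rule z(2))
qed

lemma ann_inv_all:
  assumes "z \<in> ann (s^2/\<delta>) \<delta>" "\<delta> > 0"
  shows "norm (complex_of_real (s^2) / z) < \<delta> \<and> z \<noteq> 0 \<and> norm z < \<delta>"
  using ann_inv[OF assms] by blast

lemma sqrt_sq_less:
  assumes "0 \<le> t" "t < sqrt a"
  shows "t^2 < a"
proof -
  have a: "a > 0" using assms by (smt (verit) real_sqrt_le_0_iff)
  have "t^2 < (sqrt a)^2" using assms by (intro power_strict_mono) auto
  then show ?thesis using a by simp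
qed

lemma prod_ne1:
  fixes a b :: complex
  assumes "norm a < 1/2" "norm b < 1/2"
  shows "a * b \<noteq> 1"
proof
  assume "a * b = 1"
  then have "norm a * norm b = 1" by (metis norm_mult norm_one)
  moreover have "norm a * norm b \<le> 1/2 * (1/2)" using assms by (intro mult_mono) auto
  ultimately show False by simp
qed

lemma hol_isCont:
  assumes "f holomorphic_on ball 0 d" "d > 0"
  shows "isCont f 0"
proof -
  have "continuous_on (ball 0 d) f" by (rule holomorphic_on_imp_continuous_on[OF assms(1)])
  then show ?thesis using assms(2) continuous_on_eq_continuous_at[OF open_ball, of 0 d f] by auto
qed

lemma hard:
  fixes \<nu> :: nat and f g h :: "complex \<Rightarrow> complex" and r :: real
  assumes nu: "\<nu> \<ge> 5" and r: "r > 0"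
    and hf: "f holomorphic_on ball 0 r" and hg: "g holomorphic_on ball 0 r" and hh: "h holomorphic_on ball 0 r"
    and smA: "(\<lambda>(a, b, k, d). norm (A a b k d) * \<rho>A ^ (a + b + k + d)) summable_on UNIV" and rA: "\<rho>A > 0"
    and smB: "(\<lambda>(a, b, k, d). norm (B a b k d) * \<rho>B ^ (a + b + k + d)) summable_on UNIV" and rB: "\<rho>B > 0"
    and e: "\<epsilon> > 0"
    and eq: "\<forall>z \<zeta>. norm z < \<epsilon> \<and> norm \<zeta> < \<epsilon> \<longrightarrow>
           Phi \<nu> f g h z \<zeta> = cnj z ^ 3 * eval_ps4 A z \<zeta> (cnj z) (cnj \<zeta>)
                  + cnj \<zeta> * eval_ps4 B z \<zeta> (cnj z) (cnj \<zeta>)"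
  shows "\<exists>\<epsilon>>0. \<forall>\<zeta>. norm \<zeta> < \<epsilon> \<longrightarrow> f \<zeta> = 0 \<and> g \<zeta> = 0 \<and> h \<zeta> = 0"
proof -
  define \<delta> where "\<delta> = min (min \<epsilon> r) (min (min \<rho>A \<rho>B) (1/2))"
  have \<delta>: "\<delta> > 0" "\<delta> \<le> \<epsilon>" "\<delta> \<le> r" "\<delta> \<le> \<rho>A" "\<delta> \<le> \<rho>B" "\<delta> \<le> 1/2"
    using e r rA rB by (auto simp: \<delta>_def)
  let ?G = "Gt \<nu> f g h A B"
  have s0: "?G z \<zeta> (cnj z) (cnj \<zeta>) = 0" if "norm z < \<delta>" "norm \<zeta> < \<delta>" for z \<zeta>
    using eq[rule_format, of z \<zeta>] that \<delta> Phi_Gt[of \<nu> f g h z \<zeta> A B] by auto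
  have s1: "?G z \<zeta> (complex_of_real (s^2) / z) (cnj \<zeta>) = 0"
    if s: "0 < s" "s < \<delta>" and \<zeta>: "norm \<zeta> < \<delta>" and z: "z \<in> ann (s^2/\<delta>) \<delta>" for s \<zeta> z
  proof (rule analytic_continuation[where f="\<lambda>z. ?G z \<zeta> (complex_of_real (s^2) / z) (cnj \<zeta>)"
        and S="ann (s^2/\<delta>) \<delta>" and U="sphere 0 s" and \<xi>="complex_of_real s"])
    show "(\<lambda>z. ?G z \<zeta> (complex_of_real (s^2) / z) (cnj \<zeta>)) holomorphic_on ann (s^2/\<delta>) \<delta>"
      apply (rule Gt_holo[where qa="\<lambda>z. z" and qb="\<lambda>z. \<zeta>" and qc="\<lambda>z. complex_of_real (s^2) / z"
          and qd="\<lambda>z. cnj \<zeta>", OF smA smB ann_open[of "s^2/\<delta>" \<delta>] _ _ _ _ hf hg hh])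
      apply (intro holomorphic_intros)
      apply (intro holomorphic_intros)
      apply (intro holomorphic_intros)
      apply (drule ann_inv(2)[OF _ \<delta>(1)])
      apply simp
      apply (intro holomorphic_intros)
      using \<zeta> \<delta> prod_ne1[of \<zeta> "cnj \<zeta>"] by (auto dest!: ann_inv_all[OF _ \<delta>(1)])
  next
    show "open (ann (s^2/\<delta>) \<delta>)" by (rule ann_open)
    show "connected (ann (s^2/\<delta>) \<delta>)" by (rule ann_connected)
    have ss: "s^2/\<delta> < s" using s \<delta>(1) by (simp add: divide_less_eq power2_eq_square)
    show "sphere 0 s \<subseteq> ann (s^2/\<delta>) \<delta>" using ss s by (auto simp: ann_def)
    show "complex_of_real s \<in> ann (s^2/\<delta>) \<delta>" using ss s by (auto simp: ann_def)
    show "complex_of_real s islimpt sphere 0 s" using s(1) by (rule sphere_limpt)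
    show "z \<in> ann (s^2/\<delta>) \<delta>" by (rule z)
  next
    fix w :: complex assume w: "w \<in> sphere 0 s"
    then have "complex_of_real (s^2) / w = cnj w" using s by (intro sphere_cnj) auto
    then show "?G w \<zeta> (complex_of_real (s^2) / w) (cnj \<zeta>) = 0" using s0[of w \<zeta>] w s \<zeta> by auto
  qed
  have s2: "?G z \<zeta> (complex_of_real (s^2) / z) (complex_of_real (t^2) / \<zeta>) = 0"
    if s: "0 < s" "s < \<delta>" and t: "0 < t" "t < \<delta>" and z: "z \<in> ann (s^2/\<delta>) \<delta>"
      and \<zeta>: "\<zeta> \<in> ann (t^2/\<delta>) \<delta>" for s t z \<zeta>
  proof (rule analytic_continuation[where f="\<lambda>\<zeta>. ?G z \<zeta> (complex_of_real (s^2) / z) (complex_of_real (t^2) / \<zeta>)"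
        and S="ann (t^2/\<delta>) \<delta>" and U="sphere 0 t" and \<xi>="complex_of_real t"])
    have zi: "norm (complex_of_real (s^2) / z) < \<delta> \<and> z \<noteq> 0 \<and> norm z < \<delta>"
      by (rule ann_inv_all[OF z \<delta>(1)])
    show "(\<lambda>\<zeta>. ?G z \<zeta> (complex_of_real (s^2) / z) (complex_of_real (t^2) / \<zeta>)) holomorphic_on ann (t^2/\<delta>) \<delta>"
    proof -
      have hq: "(\<lambda>\<zeta>. complex_of_real (t^2) / \<zeta>) holomorphic_on ann (t^2/\<delta>) \<delta>"
        using ann_inv(2)[OF _ \<delta>(1)] by (intro holomorphic_intros) auto
      have hc1: "(\<lambda>_. z) holomorphic_on ann (t^2/\<delta>) \<delta>" by (intro holomorphic_intros)
      have hc2: "(\<lambda>_. complex_of_real (s^2) / z) holomorphic_on ann (t^2/\<delta>) \<delta>" by (intro holomorphic_intros)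
      have hid: "(\<lambda>\<zeta>. \<zeta>) holomorphic_on ann (t^2/\<delta>) \<delta>" by (intro holomorphic_intros)
      have nz: "\<zeta> * (complex_of_real (t^2) / \<zeta>) \<noteq> 1" if "\<zeta> \<in> ann (t^2/\<delta>) \<delta>" for \<zeta>
      proof (rule prod_ne1)
        show "norm \<zeta> < 1/2" "norm (complex_of_real (t^2) / \<zeta>) < 1/2"
          using ann_inv_all[OF that \<delta>(1)] \<delta> by auto
      qed
      show ?thesis
        apply (rule Gt_holo[where qa="\<lambda>_. z" and qb="\<lambda>\<zeta>. \<zeta>" and qc="\<lambda>_. complex_of_real (s^2) / z"
          and qd="\<lambda>\<zeta>. complex_of_real (t^2) / \<zeta>", OF smA smB ann_open[of "t^2/\<delta>" \<delta>] hc1 hid hc2 hq hf hg hh])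
        using zi \<delta> nz by (auto dest!: ann_inv_all[OF _ \<delta>(1)])
    qed
  next
    show "open (ann (t^2/\<delta>) \<delta>)" by (rule ann_open)
    show "connected (ann (t^2/\<delta>) \<delta>)" by (rule ann_connected)
    have ss: "t^2/\<delta> < t" using t \<delta>(1) by (simp add: divide_less_eq power2_eq_square)
    show "sphere 0 t \<subseteq> ann (t^2/\<delta>) \<delta>" using ss t by (auto simp: ann_def)
    show "complex_of_real t \<in> ann (t^2/\<delta>) \<delta>" using ss t by (auto simp: ann_def)
    show "complex_of_real t islimpt sphere 0 t" using t(1) by (rule sphere_limpt)
    show "\<zeta> \<in> ann (t^2/\<delta>) \<delta>" by (rule \<zeta>)
  next
    fix w :: complex assume w: "w \<in> sphere 0 t"
    then have "complex_of_real (t^2) / w = cnj w" using t by (intro sphere_cnj) auto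
    then show "?G z w (complex_of_real (s^2) / z) (complex_of_real (t^2) / w) = 0"
      using s1[of s w z] w s t z by auto
  qed
  have s3: "?G (complex_of_real x) \<zeta> (complex_of_real y) 0 = 0"
    if x: "0 < x" "x < \<delta>" and y: "0 < y" "y < \<delta>" and \<zeta>: "\<zeta> \<noteq> 0" "norm \<zeta> < \<delta>" for x y \<zeta>
  proof -
    define s where "s = sqrt (x * y)"
    have sxy: "s^2 = x * y" using x y by (simp add: s_def)
    have s0': "0 < s" using x y by (simp add: s_def)
    have "x * y < \<delta> * \<delta>" using x y by (intro mult_strict_mono) auto
    then have sd: "s < \<delta>" unfolding s_def using \<delta>(1) by (intro real_less_lsqrt) (auto simp: power2_eq_square)
    have zin: "complex_of_real x \<in> ann (s^2/\<delta>) \<delta>"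
      using x y \<delta>(1) by (auto simp: ann_def sxy divide_less_eq)
    have w1: "complex_of_real (s^2) / complex_of_real x = complex_of_real y"
      using x by (simp add: sxy)
    define \<phi> where "\<phi> w = ?G (complex_of_real x) \<zeta> (complex_of_real y) w" for w
    have hol: "\<phi> holomorphic_on ball 0 \<delta>"
    proof -
      have nz: "\<zeta> * w \<noteq> 1" if "w \<in> ball 0 \<delta>" for w
        using that \<zeta> \<delta> by (intro prod_ne1) auto
      have hc1: "(\<lambda>_. complex_of_real x) holomorphic_on ball 0 \<delta>" by (intro holomorphic_intros)
      have hc2: "(\<lambda>_. \<zeta>) holomorphic_on ball 0 \<delta>" by (intro holomorphic_intros)
      have hc3: "(\<lambda>_. complex_of_real y) holomorphic_on ball 0 \<delta>" by (intro holomorphic_intros)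
      have hid: "(\<lambda>w. w) holomorphic_on ball 0 \<delta>" by (intro holomorphic_intros)
      show ?thesis unfolding \<phi>_def
        apply (rule Gt_holo[where qa="\<lambda>_. complex_of_real x" and qb="\<lambda>_. \<zeta>" and qc="\<lambda>_. complex_of_real y"
          and qd="\<lambda>w. w", OF smA smB open_ball hc1 hc2 hc3 hid hf hg hh])
        using nz x y \<zeta> \<delta> by auto
    qed
    then have "continuous_on (ball 0 \<delta>) \<phi>" by (rule holomorphic_on_imp_continuous_on)
    then have cont: "isCont \<phi> 0"
      using \<delta>(1) continuous_on_eq_continuous_at[OF open_ball, of 0 \<delta> \<phi>] by auto
    define Q where "Q u = \<phi> (u * u / \<zeta>)" for u
    have cQ: "isCont Q 0" unfolding Q_def
      using cont \<zeta>(1) by (intro continuous_intros isCont_o2[where f="\<lambda>u. u * u / \<zeta>" and g=\<phi>]) auto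
    define d where "d = min \<delta> (sqrt (\<delta> * norm \<zeta>))"
    have d: "d > 0" using \<delta>(1) \<zeta> by (auto simp: d_def)
    have "Q (complex_of_real t) = 0" if t: "0 < t" "t < d" for t
    proof -
      have "t^2 < \<delta> * norm \<zeta>" using t by (intro sqrt_sq_less) (auto simp: d_def)
      then have \<zeta>in: "\<zeta> \<in> ann (t^2/\<delta>) \<delta>" using \<zeta> \<delta>(1) by (auto simp: ann_def divide_less_eq mult.commute)
      have "?G (complex_of_real x) \<zeta> (complex_of_real (s^2) / complex_of_real x) (complex_of_real (t^2) / \<zeta>) = 0"
        using s2[OF s0' sd t(1) _ zin \<zeta>in] t by (auto simp: d_def)
      then show ?thesis unfolding Q_def \<phi>_def w1 by (simp add: power2_eq_square)
    qed
    then have "Q 0 = 0" by (intro lim_zero[OF cQ d]) auto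
    then show ?thesis by (simp add: Q_def \<phi>_def)
  qed
  have s4: "f \<zeta> = 0 \<and> g \<zeta> = 0 \<and> h \<zeta> = 0" if \<zeta>: "\<zeta> \<noteq> 0" "norm \<zeta> < \<delta>" for \<zeta>
  proof -
    obtain m where m: "\<nu> = m + 5" using nu by (metis add.commute le_add_diff_inverse)
    define X where "X = complex_of_real (\<delta>/2)"
    have X0: "X \<noteq> 0" using \<delta>(1) by (simp add: X_def)
    define R where "R w = (X + w * \<zeta>) * w ^ (m + 1) * fs f 0 + (X + w * \<zeta>) ^ 2 * w ^ m * fs g 0 / 2
        - w ^ (m + 2) * fs h 0 / 2 - eval_ps4 A X \<zeta> w 0" for w
    define \<alpha> where "\<alpha> = - (X ^ \<nu> * h \<zeta>) / 2"
    define \<beta> where "\<beta> = X ^ (\<nu> - 1) * f \<zeta>"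
    define \<gamma> where "\<gamma> = X ^ (\<nu> - 2) * g \<zeta> / 2"
    have key: "?G X \<zeta> w 0 = \<alpha> + w * \<beta> + w^2 * \<gamma> + w^3 * R w" for w
      unfolding Gt_def R_def \<alpha>_def \<beta>_def \<gamma>_def m
      by (simp add: power_add algebra_simps eval_nat_numeral)
    have zero: "?G X \<zeta> (complex_of_real y) 0 = 0" if "0 < y" "y < \<delta>" for y
      using s3[of "\<delta>/2" y \<zeta>] that \<zeta> \<delta>(1) by (simp add: X_def)
    have hA: "(\<lambda>w. eval_ps4 A X \<zeta> w 0) holomorphic_on ball 0 \<delta>"
    proof -
      have hc1: "(\<lambda>_. X) holomorphic_on ball 0 \<delta>" by (intro holomorphic_intros)
      have hc2: "(\<lambda>_. \<zeta>) holomorphic_on ball 0 \<delta>" by (intro holomorphic_intros)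
      have hc3: "(\<lambda>_. 0::complex) holomorphic_on ball 0 \<delta>" by (intro holomorphic_intros)
      have hid: "(\<lambda>w. w) holomorphic_on ball 0 \<delta>" by (intro holomorphic_intros)
      show ?thesis
        by (rule ps4_holo[OF smA open_ball hc1 hc2 hid hc3]) (use \<zeta> \<delta> rA in \<open>auto simp: X_def\<close>)
    qed
    then have cA: "isCont (\<lambda>w. eval_ps4 A X \<zeta> w 0) 0" using \<delta>(1) by (rule hol_isCont)
    have cR: "isCont R 0" unfolding R_def by (intro continuous_intros cA) auto
    have "\<alpha> = 0"
    proof -
      have "(\<lambda>w. \<alpha> + w * \<beta> + w^2 * \<gamma> + w^3 * R w) 0 = 0"
        by (rule lim_zero) (use cR \<delta>(1) zero key in \<open>auto intro!: continuous_intros\<close>)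
      then show ?thesis by simp
    qed
    then have h0: "h \<zeta> = 0" using X0 by (simp add: \<alpha>_def)
    have "\<beta> = 0"
    proof -
      have "(\<lambda>w. \<beta> + w * \<gamma> + w^2 * R w) 0 = 0"
      proof (rule lim_zero)
        fix y :: real assume y: "0 < y" "y < \<delta>"
        have "complex_of_real y * (\<beta> + complex_of_real y * \<gamma> + (complex_of_real y)^2 * R (complex_of_real y)) = 0"
          using zero[OF y] key[of "complex_of_real y"] \<open>\<alpha> = 0\<close> by (simp add: algebra_simps power2_eq_square power3_eq_cube)
        then show "(\<lambda>w. \<beta> + w * \<gamma> + w^2 * R w) (complex_of_real y) = 0" using y by simp
      qed (use cR \<delta>(1) in \<open>auto intro!: continuous_intros\<close>)
      then show ?thesis by simp
    qed
    then have f0: "f \<zeta> = 0" using X0 by (simp add: \<beta>_def)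
    have "\<gamma> = 0"
    proof -
      have "(\<lambda>w. \<gamma> + w * R w) 0 = 0"
      proof (rule lim_zero)
        fix y :: real assume y: "0 < y" "y < \<delta>"
        have "(complex_of_real y)^2 * (\<gamma> + complex_of_real y * R (complex_of_real y)) = 0"
          using zero[OF y] key[of "complex_of_real y"] \<open>\<alpha> = 0\<close> \<open>\<beta> = 0\<close> by (simp add: algebra_simps power2_eq_square power3_eq_cube)
        then show "(\<lambda>w. \<gamma> + w * R w) (complex_of_real y) = 0" using y by simp
      qed (use cR \<delta>(1) in \<open>auto intro!: continuous_intros\<close>)
      then show ?thesis by simp
    qed
    then have g0: "g \<zeta> = 0" using X0 by (simp add: \<gamma>_def)
    show ?thesis using f0 g0 h0 by simp
  qed
  have z0: "f 0 = 0 \<and> g 0 = 0 \<and> h 0 = 0"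
  proof -
    have ev: "f (complex_of_real y) = 0 \<and> g (complex_of_real y) = 0 \<and> h (complex_of_real y) = 0"
      if "0 < y" "y < \<delta>" for y
      using s4[of "complex_of_real y"] that by simp
    have "f 0 = 0" by (rule lim_zero[OF hol_isCont[OF hf r] \<delta>(1)]) (use ev in auto)
    moreover have "g 0 = 0" by (rule lim_zero[OF hol_isCont[OF hg r] \<delta>(1)]) (use ev in auto)
    moreover have "h 0 = 0" by (rule lim_zero[OF hol_isCont[OF hh r] \<delta>(1)]) (use ev in auto)
    ultimately show ?thesis by simp
  qed
  have "\<forall>\<zeta>. norm \<zeta> < \<delta> \<longrightarrow> f \<zeta> = 0 \<and> g \<zeta> = 0 \<and> h \<zeta> = 0"
  proof (intro allI impI)
    fix \<zeta> :: complex assume "norm \<zeta> < \<delta>"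
    then show "f \<zeta> = 0 \<and> g \<zeta> = 0 \<and> h \<zeta> = 0" using s4[of \<zeta>] z0 by (cases "\<zeta> = 0") auto
  qed
  then show ?thesis using \<delta>(1) by blast
qed

theorem lemma7p4:
  fixes \<nu> :: nat and f g h :: "complex \<Rightarrow> complex" and r :: real
  assumes "\<nu> \<ge> 5" and "r > 0"
    and "f holomorphic_on ball 0 r" and "g holomorphic_on ball 0 r" and "h holomorphic_on ball 0 r"
  shows "O_zbar3_zetabar1 (Phi \<nu> f g h) \<longleftrightarrow>
         (\<exists>\<epsilon>>0. \<forall>\<zeta>. norm \<zeta> < \<epsilon> \<longrightarrow> f \<zeta> = 0 \<and> g \<zeta> = 0 \<and> h \<zeta> = 0)"
proof
  assume "O_zbar3_zetabar1 (Phi \<nu> f g h)"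
  then obtain A B \<epsilon> where cA: "conv_ps4 A" and cB: "conv_ps4 B" and e: "\<epsilon> > 0"
    and eq: "\<forall>z \<zeta>. norm z < \<epsilon> \<and> norm \<zeta> < \<epsilon> \<longrightarrow>
           Phi \<nu> f g h z \<zeta> = cnj z ^ 3 * eval_ps4 A z \<zeta> (cnj z) (cnj \<zeta>)
                  + cnj \<zeta> * eval_ps4 B z \<zeta> (cnj z) (cnj \<zeta>)"
    unfolding O_zbar3_zetabar1_def by blast
  obtain \<rho>A where rA: "\<rho>A > 0" and smA: "(\<lambda>(a, b, k, d). norm (A a b k d) * \<rho>A ^ (a + b + k + d)) summable_on UNIV"
    using cA unfolding conv_ps4_def by blast
  obtain \<rho>B where rB: "\<rho>B > 0" and smB: "(\<lambda>(a, b, k, d). norm (B a b k d) * \<rho>B ^ (a + b + k + d)) summable_on UNIV"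
    using cB unfolding conv_ps4_def by blast
  show "\<exists>\<epsilon>>0. \<forall>\<zeta>. norm \<zeta> < \<epsilon> \<longrightarrow> f \<zeta> = 0 \<and> g \<zeta> = 0 \<and> h \<zeta> = 0"
    by (rule hard[OF assms smA rA smB rB e eq])
next
  assume "\<exists>\<epsilon>>0. \<forall>\<zeta>. norm \<zeta> < \<epsilon> \<longrightarrow> f \<zeta> = 0 \<and> g \<zeta> = 0 \<and> h \<zeta> = 0"
  then obtain \<epsilon> where e: "\<epsilon> > 0" and z: "\<And>\<zeta>. norm \<zeta> < \<epsilon> \<Longrightarrow> f \<zeta> = 0 \<and> g \<zeta> = 0 \<and> h \<zeta> = 0" by blast
  define Z where "Z = (\<lambda>(a::nat) (b::nat) (k::nat) (d::nat). 0::complex)"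
  have cZ: "conv_ps4 Z" unfolding conv_ps4_def Z_def by (intro exI[of _ 1]) (simp add: case_prod_unfold)
  have eZ: "eval_ps4 Z x1 x2 x3 x4 = 0" for x1 x2 x3 x4 unfolding eval_ps4_def Z_def by (simp add: case_prod_unfold)
  show "O_zbar3_zetabar1 (Phi \<nu> f g h)"
    unfolding O_zbar3_zetabar1_def
  proof (intro exI[of _ Z] conjI cZ exI[of _ \<epsilon>] e allI impI)
    fix z \<zeta> :: complex assume "norm z < \<epsilon> \<and> norm \<zeta> < \<epsilon>"
    then have "f \<zeta> = 0" "g \<zeta> = 0" "h \<zeta> = 0" using z by auto
    then show "Phi \<nu> f g h z \<zeta> = cnj z ^ 3 * eval_ps4 Z z \<zeta> (cnj z) (cnj \<zeta>) + cnj \<zeta> * eval_ps4 Z z \<zeta> (cnj z) (cnj \<zeta>)"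
      by (simp add: eZ Phi_def Let_def)
  qed
qed

end
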